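(* Let $q\ge1$, $N=2^q$, and let $B^{(1)}=(b_{i,j})_{i,j=1}^{N-1}$ be the symmetric Toeplitz matrix with $b_{i,i}=\frac{2N}3-1$, $b_{i,j}=\frac N6-1$ if $|i-j|=1$, and $b_{i,j}=-1$ if $|i-j|\ge2$. For $k=2,\dots,q$ define $B^{(k)}=R_kB^{(k-1)}R_k^T$, where $R_k:\mathbb R^{N/2^{k-2}-1}\to\mathbb R^{N/2^{k-1}-1}$ is $(R_k\nu)_i=\nu_{2i-1}+2\nu_{2i}+\nu_{2i+1}$. Let $L_{N/2^{k-1}-1}=\mathrm{tridiag}(-1,2,-1)$ be the one-dimensional discrete Laplacian of size $(N/2^{k-1}-1)\times(N/2^{k-1}-1)$. Then for every $1\le k\le q$ the matrix $$H^{(k)}:=B^{(k)}-\frac{2^{3k-5}}{3}N\,L_{N/2^{k-1}-1}$$ is positive semi-definite. *)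

theory Defs
  imports Complex_Main
begin

text \<open>Matrices of varying size are represented as functions nat => nat => real,
  with indices ranging over {1..n} (as in the paper); entries outside are irrelevant.\<close>

type_synonym rmat = "nat \<Rightarrow> nat \<Rightarrow> real"

definition B1 :: "nat \<Rightarrow> rmat" where
  "B1 N i j = (if i = j then 2 * real N / 3 - 1
               else if i = j + 1 \<or> j = i + 1 then real N / 6 - 1
               else -1)"

definition Rcoef :: "nat \<Rightarrow> nat \<Rightarrow> real" where
  "Rcoef i a = (if a = 2*i - 1 then 1 else if a = 2*i then 2
                else if a = 2*i + 1 then 1 else 0)"

definition conjR :: "nat \<Rightarrow> rmat \<Rightarrow> rmat" where
  "conjR m B i j = (\<Sum>a\<in>{1..m}. \<Sum>b\<in>{1..m}. Rcoef i a * B a b * Rcoef j b)"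

definition msize :: "nat \<Rightarrow> nat \<Rightarrow> nat" where
  "msize N k = N div 2^(k-1) - 1"

text \<open>Bseq N j = B^(j+1).\<close>
primrec Bseq :: "nat \<Rightarrow> nat \<Rightarrow> rmat" where
  "Bseq N 0 = B1 N"
| "Bseq N (Suc j) = conjR (msize N (Suc j)) (Bseq N j)"

definition Bk :: "nat \<Rightarrow> nat \<Rightarrow> rmat" where
  "Bk N k = Bseq N (k - 1)"

definition lap :: rmat where
  "lap i j = (if i = j then 2 else if i = j + 1 \<or> j = i + 1 then -1 else 0)"

definition Hk :: "nat \<Rightarrow> nat \<Rightarrow> rmat" where
  "Hk N k i j = Bk N k i j - (2 powr (3 * real k - 5) / 3) * real N * lap i j"

definition psd :: "nat \<Rightarrow> rmat \<Rightarrow> bool" where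
  "psd n A \<longleftrightarrow> (\<forall>i\<in>{1..n}. \<forall>j\<in>{1..n}. A i j = A j i) \<and>
     (\<forall>x :: nat \<Rightarrow> real. (\<Sum>i\<in>{1..n}. \<Sum>j\<in>{1..n}. x i * A i j * x j) \<ge> 0)"

end

theory Submission
  imports Defs "HOL-Analysis.Convex"
begin

definition Bx :: "real \<Rightarrow> real \<Rightarrow> rmat" where
  "Bx N s i j = (if i = j then s^3 * N * 2 / 3
               else if i = j + 1 \<or> j = i + 1 then s^3 * N / 6
               else 0) - s^4"

lemma sum_Rcoef:
  assumes "1 \<le> i" "2*i+1 \<le> m"
  shows "(\<Sum>a\<in>{1..m}. Rcoef i a * g a) = g (2*i-1) + 2 * g (2*i) + g (2*i+1)"
proof -
  have m: "2*i-1 \<in> {1..m}" "2*i \<in> {1..m}" "2*i+1 \<in> {1..m}" using assms by auto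
  have "\<And>a. Rcoef i a * g a = (if a = 2*i-1 then g (2*i-1) else 0) + (if a = 2*i then 2 * g (2*i) else 0)
      + (if a = 2*i+1 then g (2*i+1) else 0)"
    using assms by (auto simp: Rcoef_def)
  then have "(\<Sum>a\<in>{1..m}. Rcoef i a * g a) = (\<Sum>a\<in>{1..m}. (if a = 2*i-1 then g (2*i-1) else 0) + (if a = 2*i then 2 * g (2*i) else 0)
      + (if a = 2*i+1 then g (2*i+1) else 0))" by simp
  also have "\<dots> = g (2*i-1) + 2 * g (2*i) + g (2*i+1)"
    using m by (simp add: sum.distrib sum.delta del: atLeastAtMost_iff)
  finally show ?thesis .
qed

lemma conj_step:
  assumes i: "1 \<le> i" "i \<le> m" and j: "1 \<le> j" "j \<le> m"
    and B: "\<forall>a\<in>{1..2*m+1}. \<forall>b\<in>{1..2*m+1}. B a b = Bx N s a b"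
  shows "conjR (2*m+1) B i j = Bx N (2*s) i j"
proof -
  have "conjR (2*m+1) B i j = (\<Sum>a\<in>{1..2*m+1}. Rcoef i a * (\<Sum>b\<in>{1..2*m+1}. Rcoef j b * B a b))"
    unfolding conjR_def sum_distrib_left by (intro sum.cong refl) (simp add: ac_simps)
  also have "\<dots> = (\<Sum>a\<in>{1..2*m+1}. Rcoef i a * (B a (2*j-1) + 2 * B a (2*j) + B a (2*j+1)))"
  proof -
    have "\<And>a. (\<Sum>b\<in>{1..2*m+1}. Rcoef j b * B a b) = B a (2*j-1) + 2 * B a (2*j) + B a (2*j+1)"
      using j by (intro sum_Rcoef) auto
    then show ?thesis by (simp only:)
  qed
  also have "\<dots> = (B (2*i-1) (2*j-1) + 2 * B (2*i-1) (2*j) + B (2*i-1) (2*j+1))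
     + 2 * (B (2*i) (2*j-1) + 2 * B (2*i) (2*j) + B (2*i) (2*j+1))
     + (B (2*i+1) (2*j-1) + 2 * B (2*i+1) (2*j) + B (2*i+1) (2*j+1))"
    using i by (subst sum_Rcoef) auto
  also have "\<dots> = (Bx N s (2*i-1) (2*j-1) + 2 * Bx N s (2*i-1) (2*j) + Bx N s (2*i-1) (2*j+1))
     + 2 * (Bx N s (2*i) (2*j-1) + 2 * Bx N s (2*i) (2*j) + Bx N s (2*i) (2*j+1))
     + (Bx N s (2*i+1) (2*j-1) + 2 * Bx N s (2*i+1) (2*j) + Bx N s (2*i+1) (2*j+1))"
  proof -
    have "\<forall>a\<in>{2*i-1,2*i,2*i+1}. \<forall>b\<in>{2*j-1,2*j,2*j+1}. B a b = Bx N s a b"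
      using B i j by (cases i; cases j) auto
    then show ?thesis by simp
  qed
  also have "\<dots> = Bx N (2*s) i j"
  proof -
    consider "i = j" | "i = j + 1" | "j = i + 1" | "i \<ge> j + 2" | "j \<ge> i + 2" by linarith
    then show ?thesis
    proof cases
      case 1 then obtain j' where "j = Suc j'" "i = Suc j'" using j by (cases j) auto
      then show ?thesis by (simp add: Bx_def)
    next
      case 2 then obtain j' where "j = Suc j'" "i = Suc (Suc j')" using j by (cases j) auto
      then show ?thesis by (simp add: Bx_def, (simp add: field_simps power_mult_distrib)?)
    next
      case 3 then obtain i' where "i = Suc i'" "j = Suc (Suc i')" using i by (cases i) auto
      then show ?thesis by (simp add: Bx_def, (simp add: field_simps power_mult_distrib)?)
    next
      case 4 obtain i' j' where "i = Suc i'" "j = Suc j'" using i j by (cases i; cases j) auto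
      then show ?thesis using 4 by (simp add: Bx_def, (simp add: power_mult_distrib)?)
    next
      case 5 obtain i' j' where "i = Suc i'" "j = Suc j'" using i j by (cases i; cases j) auto
      then show ?thesis using 5 by (simp add: Bx_def, (simp add: power_mult_distrib)?)
    qed
  qed
  finally show ?thesis .
qed

lemma pow_div: "j \<le> q \<Longrightarrow> (2::nat)^q div 2^j = 2^(q-j)"
proof -
  assume "j \<le> q"
  then have "(2::nat)^q = 2^(q-j) * 2^j" by (simp add: power_add[symmetric])
  then show ?thesis by simp
qed

lemma Bseq_closed:
  assumes N: "N = 2^q"
  shows "j < q \<Longrightarrow> \<forall>a\<in>{1..msize N (Suc j)}. \<forall>b\<in>{1..msize N (Suc j)}. Bseq N j a b = Bx (real N) (2^j) a b"
proof (induction j)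
  case 0
  then show ?case by (auto simp: B1_def Bx_def)
next
  case (Suc j)
  define m where "m = msize N (Suc (Suc j))"
  have m1: "m = 2^(q - Suc j) - 1" using Suc.prems pow_div[of "Suc j" q] by (simp add: m_def msize_def N)
  have m2: "msize N (Suc j) = 2*m+1"
  proof -
    have "msize N (Suc j) = 2^(q-j) - 1" using Suc.prems pow_div[of j q] by (simp add: msize_def N)
    moreover have "(2::nat)^(q-j) = 2 * 2^(q - Suc j)"
    proof -
      have "q - j = Suc (q - Suc j)" using Suc.prems by simp
      then show ?thesis by simp
    qed
    moreover have "(2::nat)^(q - Suc j) \<ge> 1" by simp
    ultimately show ?thesis using m1 by linarith
  qed
  have IH: "\<forall>a\<in>{1..2*m+1}. \<forall>b\<in>{1..2*m+1}. Bseq N j a b = Bx (real N) (2^j) a b"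
    using Suc m2 by simp
  show ?case
  proof (intro ballI)
    fix a b assume "a \<in> {1..msize N (Suc (Suc j))}" "b \<in> {1..msize N (Suc (Suc j))}"
    then have "1 \<le> a" "a \<le> m" "1 \<le> b" "b \<le> m" by (auto simp: m_def)
    then have "conjR (2*m+1) (Bseq N j) a b = Bx (real N) (2 * 2^j) a b"
      using IH by (intro conj_step) auto
    then show "Bseq N (Suc j) a b = Bx (real N) (2 ^ Suc j) a b"
      using m2 by simp
  qed
qed

definition cc :: "nat \<Rightarrow> nat \<Rightarrow> real" where
  "cc e i = (if e = i then 1 else 0) + (if e = i - 1 then 1 else 0)"

lemma T_eq:
  assumes "i \<in> {1..m}" "j \<in> {1..m}"
  shows "(\<Sum>e\<in>{0..m}. cc e i * cc e j) = (if i = j then 2 else if i = j+1 \<or> j = i+1 then 1 else 0)"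
proof -
  have "i - 1 \<le> m" using assms by auto
  have "\<And>e. cc e i * cc e j = (if e = i then (if i = j then 1 else 0) + (if i = j - 1 then 1 else 0) else 0)
     + (if e = i - 1 then (if i - 1 = j then 1 else 0) + (if i - 1 = j - 1 then 1 else 0) else 0)"
    using assms by (auto simp: cc_def)
  then have "(\<Sum>e\<in>{0..m}. cc e i * cc e j) = (\<Sum>e\<in>{0..m}. (if e = i then (if i = j then 1 else 0) + (if i = j - 1 then 1 else 0) else 0)
     + (if e = i - 1 then (if i - 1 = j then 1 else 0) + (if i - 1 = j - 1 then 1 else 0) else 0))"
    by simp
  also have "\<dots> = ((if i = j then 1 else 0) + (if i = j - 1 then 1 else 0)) + ((if i - 1 = j then 1 else 0) + (if i - 1 = j - 1 then 1 else 0))"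
    using assms \<open>i - 1 \<le> m\<close> by (simp add: sum.distrib)
  also have "\<dots> = (if i = j then 2 else if i = j+1 \<or> j = i+1 then 1 else 0)"
    using assms by auto
  finally show ?thesis .
qed

lemma cc_sum:
  assumes "i \<in> {1..m}"
  shows "(\<Sum>e\<in>{0..m}. cc e i) = 2"
proof -
  have "i - 1 \<le> m" using assms by auto
  then show ?thesis using assms by (simp add: cc_def sum.distrib)
qed

lemma quad_eq:
  fixes x :: "nat \<Rightarrow> real"
  shows "(\<Sum>i\<in>A. \<Sum>j\<in>A. x i * (\<alpha> * (\<Sum>e\<in>E. c e i * c e j) - \<beta>) * x j)
     = \<alpha> * (\<Sum>e\<in>E. (\<Sum>i\<in>A. c e i * x i)^2) - \<beta> * (\<Sum>i\<in>A. x i)^2"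
proof -
  have "(\<Sum>i\<in>A. \<Sum>j\<in>A. x i * (\<alpha> * (\<Sum>e\<in>E. c e i * c e j) - \<beta>) * x j)
      = \<alpha> * (\<Sum>i\<in>A. \<Sum>j\<in>A. \<Sum>e\<in>E. (c e i * x i) * (c e j * x j)) - \<beta> * (\<Sum>i\<in>A. \<Sum>j\<in>A. x i * x j)"
    by (simp add: sum_subtractf sum_distrib_left sum_distrib_right algebra_simps)
  also have "(\<Sum>i\<in>A. \<Sum>j\<in>A. \<Sum>e\<in>E. (c e i * x i) * (c e j * x j)) = (\<Sum>e\<in>E. (\<Sum>i\<in>A. c e i * x i)^2)"
  proof -
    have "(\<Sum>e\<in>E. (\<Sum>i\<in>A. c e i * x i)^2) = (\<Sum>e\<in>E. \<Sum>i\<in>A. \<Sum>j\<in>A. (c e i * x i) * (c e j * x j))"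
      by (simp add: power2_eq_square sum_product)
    also have "\<dots> = (\<Sum>i\<in>A. \<Sum>e\<in>E. \<Sum>j\<in>A. (c e i * x i) * (c e j * x j))"
      by (rule sum.swap)
    also have "\<dots> = (\<Sum>i\<in>A. \<Sum>j\<in>A. \<Sum>e\<in>E. (c e i * x i) * (c e j * x j))"
      by (intro sum.cong refl sum.swap)
    finally show ?thesis by simp
  qed
  also have "(\<Sum>i\<in>A. \<Sum>j\<in>A. x i * x j) = (\<Sum>i\<in>A. x i)^2"
    by (simp add: power2_eq_square sum_product)
  finally show ?thesis .
qed

lemma powr_eq:
  assumes "1 \<le> k"
  shows "(2::real) powr (3 * real k - 5) = (2^(k-1))^3 / 4"
proof -
  have r: "real (3*(k-1)) = 3 * real k - 3" using assms by (simp add: of_nat_diff)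
  have "3 * real k - 5 = real (3*(k-1)) - 2" using r by linarith
  then have "(2::real) powr (3*real k - 5) = 2 powr real (3*(k-1)) / 2 powr 2" by (simp only: powr_diff)
  also have "(2::real) powr real (3*(k-1)) = 2^(3*(k-1))" by (rule powr_realpow) simp
  also have "(2::real) powr 2 = 4" by simp
  also have "(2::real)^(3*(k-1)) = (2^(k-1))^3" by (subst mult.commute) (rule power_mult)
  finally show ?thesis .
qed

theorem lemma4p7:
  fixes q k N :: nat
  assumes "q \<ge> 1" and "N = 2 ^ q" and "1 \<le> k" and "k \<le> q"
  shows "psd (msize N k) (Hk N k)"
proof -
  define s :: real where "s = 2^(k-1)"
  define m where "m = msize N k"
  have km: "k - 1 < q" using assms by simp
  have m_eq: "m = 2^(q-(k-1)) - 1" using pow_div[of "k-1" q] assms by (simp add: m_def msize_def)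
  have Nreal: "real N = s * (real m + 1)"
  proof -
    have "(2::nat)^(q-(k-1)) \<ge> 1" by simp
    then have "real m + 1 = 2^(q-(k-1))" using m_eq by (simp add: of_nat_diff)
    moreover have "(2::real)^q = 2^(k-1) * 2^(q-(k-1))" using km by (simp add: power_add[symmetric])
    ultimately show ?thesis using assms(2) by (simp add: s_def)
  qed
  have Bk_eq: "\<forall>a\<in>{1..m}. \<forall>b\<in>{1..m}. Bk N k a b = Bx (real N) s a b"
    using Bseq_closed[OF assms(2) km] assms(3) by (simp add: Bk_def m_def s_def)
  define \<alpha> where "\<alpha> = s^3 * real N / 4"
  define \<beta> where "\<beta> = s^4"
  have H_eq: "Hk N k i j = \<alpha> * (\<Sum>e\<in>{0..m}. cc e i * cc e j) - \<beta>" if ij: "i\<in>{1..m}" "j\<in>{1..m}" for i j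
  proof -
    have "Hk N k i j = Bx (real N) s i j - s^3/12 * real N * lap i j"
      using Bk_eq ij by (simp add: Hk_def powr_eq[OF assms(3)] s_def)
    then show ?thesis using ij
      by (simp add: T_eq Bx_def lap_def \<alpha>_def \<beta>_def, (simp add: field_simps)?)
  qed
  show ?thesis
    unfolding psd_def m_def[symmetric]
  proof (intro conjI ballI allI)
    fix i j assume "i\<in>{1..m}" "j\<in>{1..m}"
    then show "Hk N k i j = Hk N k j i" by (simp add: H_eq mult.commute)
  next
    fix x :: "nat \<Rightarrow> real"
    define z where "z e = (\<Sum>i\<in>{1..m}. cc e i * x i)" for e
    have "(\<Sum>i\<in>{1..m}. \<Sum>j\<in>{1..m}. x i * Hk N k i j * x j)
        = (\<Sum>i\<in>{1..m}. \<Sum>j\<in>{1..m}. x i * (\<alpha> * (\<Sum>e\<in>{0..m}. cc e i * cc e j) - \<beta>) * x j)"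
      by (intro sum.cong refl) (simp add: H_eq)
    also have "\<dots> = \<alpha> * (\<Sum>e\<in>{0..m}. (z e)^2) - \<beta> * (\<Sum>i\<in>{1..m}. x i)^2"
      unfolding z_def by (rule quad_eq)
    finally have Q: "(\<Sum>i\<in>{1..m}. \<Sum>j\<in>{1..m}. x i * Hk N k i j * x j) = \<alpha> * (\<Sum>e\<in>{0..m}. (z e)^2) - \<beta> * (\<Sum>i\<in>{1..m}. x i)^2" .
    have zs: "(\<Sum>e\<in>{0..m}. z e) = 2 * (\<Sum>i\<in>{1..m}. x i)"
    proof -
      have "(\<Sum>e\<in>{0..m}. z e) = (\<Sum>i\<in>{1..m}. \<Sum>e\<in>{0..m}. cc e i * x i)"
        unfolding z_def by (rule sum.swap)
      also have "\<dots> = (\<Sum>i\<in>{1..m}. 2 * x i)"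
        by (intro sum.cong refl) (simp add: sum_distrib_right[symmetric] cc_sum)
      finally show ?thesis by (simp add: sum_distrib_left)
    qed
    have cs: "(\<Sum>e\<in>{0..m}. z e * 1)^2 \<le> (\<Sum>e\<in>{0..m}. (z e)^2) * (\<Sum>e\<in>{0..m}. (1::real)^2)"
      by (rule Cauchy_Schwarz_ineq_sum)
    then have "4 * (\<Sum>i\<in>{1..m}. x i)^2 \<le> (1 + real m) * (\<Sum>e\<in>{0..m}. (z e)^2)"
      using zs by (simp add: power_mult_distrib mult.commute)
    then have cs2: "4 * (\<Sum>i\<in>{1..m}. x i)^2 \<le> (real m + 1) * (\<Sum>e\<in>{0..m}. (z e)^2)"
      by (simp add: add.commute)
    have aeq: "\<alpha> = \<beta> * (real m + 1) / 4" unfolding \<alpha>_def \<beta>_def Nreal by (simp add: power3_eq_cube power4_eq_xxxx)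
    moreover have "\<beta> \<ge> 0" unfolding \<beta>_def by simp
    ultimately have "\<alpha> * (\<Sum>e\<in>{0..m}. (z e)^2) - \<beta> * (\<Sum>i\<in>{1..m}. x i)^2
       = \<beta> / 4 * ((real m + 1) * (\<Sum>e\<in>{0..m}. (z e)^2) - 4 * (\<Sum>i\<in>{1..m}. x i)^2)"
      unfolding aeq by (simp add: field_simps)
    also have "\<dots> \<ge> 0" using cs2 \<open>\<beta> \<ge> 0\<close> by (intro mult_nonneg_nonneg) simp_all
    finally show "(\<Sum>i\<in>{1..m}. \<Sum>j\<in>{1..m}. x i * Hk N k i j * x j) \<ge> 0" using Q by simp
  qed
qed

end
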